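(* Let $X$ be a $3$-dimensional Minkowski space whose closed unit ball has no $2$-dimensional face. Then $m(X)=4$.
   Context: A Minkowski space is a finite-dimensional real normed space $(X,\|\cdot\|)$. For a set $S\subseteq X$, its midpoint set is $M(S)=\{\tfrac12(x+y): x,y\in S,\ x\neq y\}$. A set $S\subseteq X$ is an M-set if every vector in $M(S)$ has norm exactly $1$ and every vector in $S$ has norm strictly greater than $1$. $m(X)$ denotes the largest cardinality of an M-set in $X$ if such a largest finite cardinality exists, and $m(X)=\infty$ otherwise. *)

theory Defs
  imports "HOL-Analysis.Analysis"
begin

text \<open>A norm on a real vector space, given as an explicit function.
  A 3-dimensional Minkowski space is (up to isometry) the space real^3 with such a norm.\<close>
definition is_norm :: "('a::real_vector \<Rightarrow> real) \<Rightarrow> bool" where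
  "is_norm N \<longleftrightarrow>
     (\<forall>x. 0 \<le> N x) \<and> (\<forall>x. N x = 0 \<longleftrightarrow> x = 0) \<and>
     (\<forall>c x. N (c *\<^sub>R x) = \<bar>c\<bar> * N x) \<and>
     (\<forall>x y. N (x + y) \<le> N x + N y)"

definition unit_ball :: "('a::real_vector \<Rightarrow> real) \<Rightarrow> 'a set" where
  "unit_ball N = {x. N x \<le> 1}"

definition midpoint_set :: "'a::real_vector set \<Rightarrow> 'a set" where
  "midpoint_set S = {(1/2) *\<^sub>R (x + y) | x y. x \<in> S \<and> y \<in> S \<and> x \<noteq> y}"

definition M_set :: "('a::real_vector \<Rightarrow> real) \<Rightarrow> 'a set \<Rightarrow> bool" where
  "M_set N S \<longleftrightarrow> (\<forall>v \<in> midpoint_set S. N v = 1) \<and> (\<forall>x \<in> S. N x > 1)"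

definition m_num :: "('a::real_vector \<Rightarrow> real) \<Rightarrow> enat" where
  "m_num N = (SUP S \<in> {S. M_set N S}. (if finite S then enat (card S) else \<infinity>))"

end

theory Submission
  imports Defs
begin

lemma norm_zero: "is_norm N \<Longrightarrow> N 0 = 0"
  unfolding is_norm_def by blast

lemma norm_scale: "is_norm N \<Longrightarrow> N (c *\<^sub>R x) = \<bar>c\<bar> * N x"
  unfolding is_norm_def by blast

lemma norm_neg: "is_norm N \<Longrightarrow> N (- x) = N x"
  using norm_scale[of N "-1" x] by simp

lemma norm_tri: "is_norm N \<Longrightarrow> N (x + y) \<le> N x + N y"
  unfolding is_norm_def by blast

lemma norm_pos: "is_norm N \<Longrightarrow> x \<noteq> 0 \<Longrightarrow> N x > 0"
  unfolding is_norm_def by (metis less_eq_real_def)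

lemma norm_unit: "is_norm N \<Longrightarrow> x \<noteq> 0 \<Longrightarrow> N ((1 / N x) *\<^sub>R x) = 1"
  using norm_scale[of N "1 / N x" x] norm_pos[of N x] by simp

lemma convex_unit_ball:
  assumes "is_norm N" shows "convex (unit_ball N)"
  unfolding convex_def unit_ball_def
proof (clarsimp)
  fix x y :: 'a and u v :: real
  assume h: "N x \<le> 1" "N y \<le> 1" "0 \<le> u" "0 \<le> v" "u + v = 1"
  have "N (u *\<^sub>R x + v *\<^sub>R y) \<le> N (u *\<^sub>R x) + N (v *\<^sub>R y)" using norm_tri[OF assms] .
  also have "\<dots> = u * N x + v * N y" using norm_scale[OF assms] h by simp
  also have "\<dots> \<le> u * 1 + v * 1" using h by (intro add_mono mult_left_mono) auto
  finally show "N (u *\<^sub>R x + v *\<^sub>R y) \<le> 1" using h by simp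
qed

lemma support:
  fixes N :: "'a::euclidean_space \<Rightarrow> real"
  assumes nN: "is_norm N"
  shows "\<exists>w. w \<bullet> y = N y \<and> (\<forall>x. w \<bullet> x \<le> N x)"
proof (cases "y = 0")
  case True
  then show ?thesis using nN unfolding is_norm_def by (intro exI[of _ 0]) auto
next
  case False
  define v where "v = (1 / N y) *\<^sub>R y"
  have Nv: "N v = 1" using norm_unit[OF nN False] v_def by simp
  have v0: "v \<noteq> 0" using Nv norm_zero[OF nN] by auto
  have vB: "v \<in> unit_ball N" using Nv unfolding unit_ball_def by simp
  have 0: "0 \<in> unit_ball N" using norm_zero[OF nN] unfolding unit_ball_def by simp
  have "v \<notin> rel_interior (unit_ball N)"
  proof
    assume "v \<in> rel_interior (unit_ball N)"
    then obtain e where e: "e > 0" "ball v e \<inter> affine hull (unit_ball N) \<subseteq> unit_ball N"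
      unfolding mem_rel_interior_ball by blast
    define d where "d = e / (2 * norm v)"
    have d: "d > 0" using e v0 by (simp add: d_def)
    define z where "z = (1 + d) *\<^sub>R v"
    have "dist v z = d * norm v" unfolding z_def dist_norm
      using d by (simp add: algebra_simps)
    also have "\<dots> = e / 2" using v0 by (simp add: d_def)
    finally have "z \<in> ball v e" using e by simp
    moreover have "z \<in> affine hull (unit_ball N)"
    proof -
      have "(1 + d) *\<^sub>R v + (- d) *\<^sub>R 0 \<in> affine hull (unit_ball N)"
        by (rule mem_affine[OF affine_affine_hull]) (use vB 0 hull_inc in auto)
      then show ?thesis by (simp add: z_def)
    qed
    ultimately have "z \<in> unit_ball N" using e by blast
    moreover have "N z = 1 + d" using norm_scale[OF nN] Nv d by (simp add: z_def)
    ultimately show False using d unfolding unit_ball_def by simp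
  qed
  then obtain a where a: "a \<noteq> 0" "\<And>z. z \<in> unit_ball N \<Longrightarrow> a \<bullet> v \<le> a \<bullet> z"
    using supporting_hyperplane_rel_boundary[OF convex_unit_ball[OF nN] vB] by metis
  define b where "b = - a"
  have b0: "b \<noteq> 0" using a by (simp add: b_def)
  have bz: "b \<bullet> z \<le> b \<bullet> v" if "z \<in> unit_ball N" for z
    using a(2)[OF that] by (simp add: b_def)
  have bx: "b \<bullet> x \<le> (b \<bullet> v) * N x" for x
  proof (cases "x = 0")
    case True then show ?thesis using norm_zero[OF nN] by simp
  next
    case False
    have "(1 / N x) *\<^sub>R x \<in> unit_ball N" using norm_unit[OF nN False] unfolding unit_ball_def by simp
    from bz[OF this] have "(1 / N x) * (b \<bullet> x) \<le> b \<bullet> v" by simp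
    then show ?thesis using norm_pos[OF nN False] by (simp add: field_simps mult.commute)
  qed
  have bv: "b \<bullet> v > 0"
  proof (rule ccontr)
    assume "\<not> b \<bullet> v > 0"
    then have "b \<bullet> b \<le> 0" using bx[of b] norm_pos[OF nN b0]
      by (smt (verit) mult_nonpos_nonneg)
    then show False using b0 inner_gt_zero_iff[of b] by linarith
  qed
  define w where "w = (1 / (b \<bullet> v)) *\<^sub>R b"
  have "w \<bullet> x \<le> N x" for x
    using bx[of x] bv by (simp add: w_def field_simps)
  moreover have "w \<bullet> y = N y"
  proof -
    have "y = N y *\<^sub>R v" using norm_pos[OF nN False] by (simp add: v_def)
    then have "w \<bullet> y = N y * (w \<bullet> v)" by (metis inner_scaleR_right)
    also have "w \<bullet> v = 1" using bv by (simp add: w_def)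
    finally show ?thesis by simp
  qed
  ultimately show ?thesis by blast
qed


lemma Mset_mid:
  assumes "M_set N S" "a \<in> S" "b \<in> S" "a \<noteq> b"
  shows "N ((1/2) *\<^sub>R (a + b)) = 1"
  using assms unfolding M_set_def midpoint_set_def by blast

lemma Mset_gt:
  assumes "M_set N S" "a \<in> S" shows "N a > 1"
  using assms unfolding M_set_def by blast

lemma Mset_ineq:
  assumes "M_set N S" "a \<in> S" "b \<in> S" "a \<noteq> b" "\<forall>x. w \<bullet> x \<le> N x"
  shows "w \<bullet> a + w \<bullet> b \<le> 2"
proof -
  have "w \<bullet> ((1/2) *\<^sub>R (a + b)) \<le> 1" using assms Mset_mid[OF assms(1-4)] by metis
  then show ?thesis by (simp add: inner_add_right)
qed

lemma Mset_not_between: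
  fixes N :: "'a::euclidean_space \<Rightarrow> real"
  assumes nN: "is_norm N" and M: "M_set N S" and abc: "a \<in> S" "b \<in> S" "c \<in> S" "a \<noteq> b" "a \<noteq> c"
    and seg: "a \<in> closed_segment b c"
  shows False
proof -
  obtain w where w: "w \<bullet> a = N a" "\<forall>x. w \<bullet> x \<le> N x" using support[OF nN] by blast
  obtain u where u: "0 \<le> u" "u \<le> 1" "a = (1 - u) *\<^sub>R b + u *\<^sub>R c"
    using seg unfolding closed_segment_def by blast
  have wa: "w \<bullet> a = (1 - u) * (w \<bullet> b) + u * (w \<bullet> c)" using u(3) by (simp add: inner_add_right)
  have "w \<bullet> b \<ge> w \<bullet> a \<or> w \<bullet> c \<ge> w \<bullet> a"
  proof (rule ccontr)
    assume nn: "\<not> (w \<bullet> b \<ge> w \<bullet> a \<or> w \<bullet> c \<ge> w \<bullet> a)"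
    have "(1 - u) * (w \<bullet> b) \<le> (1 - u) * (w \<bullet> a)"
      using u nn by (intro mult_left_mono) auto
    have "u * (w \<bullet> c) \<le> u * (w \<bullet> a)"
      using u nn by (intro mult_left_mono) auto
    have "(1 - u) * (w \<bullet> b) + u * (w \<bullet> c) < w \<bullet> a"
    proof (cases "u = 0")
      case True then show ?thesis using nn by simp
    next
      case False
      then have "u * (w \<bullet> c) < u * (w \<bullet> a)" using u nn by simp
      with \<open>(1 - u) * (w \<bullet> b) \<le> (1 - u) * (w \<bullet> a)\<close> show ?thesis by (simp add: algebra_simps)
    qed
    then show False using wa by simp
  qed
  moreover have "w \<bullet> a + w \<bullet> b \<le> 2" using Mset_ineq[OF M abc(1,2,4) w(2)] .
  moreover have "w \<bullet> a + w \<bullet> c \<le> 2" using Mset_ineq[OF M abc(1,3,5) w(2)] .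
  moreover have "w \<bullet> a > 1" using w Mset_gt[OF M abc(1)] by simp
  ultimately show False by linarith
qed

lemma Mset_not_collinear:
  fixes N :: "'a::euclidean_space \<Rightarrow> real"
  assumes nN: "is_norm N" and M: "M_set N S" and abc: "a \<in> S" "b \<in> S" "c \<in> S" "a \<noteq> b" "a \<noteq> c" "b \<noteq> c"
  shows "\<not> collinear {a, b, c}"
proof
  assume "collinear {a, b, c}"
  then have "between (b,c) a \<or> between (c,a) b \<or> between (a,b) c" by (simp add: collinear_between_cases)
  then show False unfolding between_mem_segment
    using Mset_not_between[OF nN M] abc by metis
qed

lemma Mset_vertex:
  fixes N :: "'a::euclidean_space \<Rightarrow> real"
  assumes nN: "is_norm N" and M: "M_set N S" and a: "a \<in> S" and J: "J \<subseteq> S" "a \<notin> J"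
    and h: "a \<in> convex hull J"
  shows False
proof -
  obtain w where w: "w \<bullet> a = N a" "\<forall>x. w \<bullet> x \<le> N x" using support[OF nN] by blast
  have "J \<subseteq> {y. w \<bullet> y \<le> 2 - w \<bullet> a}"
  proof
    fix x assume "x \<in> J"
    then have "x \<in> S" "x \<noteq> a" using J by auto
    then show "x \<in> {y. w \<bullet> y \<le> 2 - w \<bullet> a}" using Mset_ineq[OF M a _ _ w(2), of x] by auto
  qed
  then have "convex hull J \<subseteq> {y. w \<bullet> y \<le> 2 - w \<bullet> a}"
    by (intro hull_minimal convex_halfspace_le)
  with h have "w \<bullet> a \<le> 1" by auto
  with w Mset_gt[OF M a] show False by simp
qed


lemma collinear_mid_pre:
  fixes a b x :: "'a::euclidean_space"
  assumes "collinear {(1/2) *\<^sub>R (b + x), (1/2) *\<^sub>R (a + x), (1/2) *\<^sub>R (a + b)}"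
  shows "collinear {a, b, x}"
proof -
  define c where "c = (1/2) *\<^sub>R (a + b + x)"
  define \<phi> where "\<phi> y = c - (1/2) *\<^sub>R y" for y :: 'a
  have e: "\<phi> a = (1/2) *\<^sub>R (b + x)" "\<phi> b = (1/2) *\<^sub>R (a + x)" "\<phi> x = (1/2) *\<^sub>R (a + b)"
    unfolding \<phi>_def c_def by (simp_all add: algebra_simps)
  from assms obtain u where u: "\<forall>p\<in>{\<phi> a, \<phi> b, \<phi> x}. \<forall>q\<in>{\<phi> a, \<phi> b, \<phi> x}. \<exists>k. p - q = k *\<^sub>R u"
    unfolding collinear_def e by blast
  have "\<exists>k. p - q = k *\<^sub>R u" if "p \<in> {a, b, x}" "q \<in> {a, b, x}" for p q
  proof -
    have "\<phi> p \<in> {\<phi> a, \<phi> b, \<phi> x}" "\<phi> q \<in> {\<phi> a, \<phi> b, \<phi> x}" using that by auto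
    then obtain k where k: "\<phi> p - \<phi> q = k *\<^sub>R u" using u by blast
    have "p - q = (-2) *\<^sub>R (\<phi> p - \<phi> q)" unfolding \<phi>_def by (simp add: algebra_simps)
    then have "p - q = (-2 * k) *\<^sub>R u" using k by simp
    then show ?thesis by blast
  qed
  then show ?thesis unfolding collinear_def by blast
qed

lemma Mset_pair:
  fixes N :: "real^3 \<Rightarrow> real"
  assumes nN: "is_norm N" and nf: "\<not> (\<exists>F. F face_of unit_ball N \<and> aff_dim F = 2)"
    and M: "M_set N S" and ab: "a \<in> S" "b \<in> S" "a \<noteq> b" and J: "J \<subseteq> S" "a \<notin> J" "b \<notin> J"
    and t: "0 < t" "t < 1" and h: "(1 - t) *\<^sub>R a + t *\<^sub>R b \<in> convex hull J"
  shows False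
proof -
  define m where "m = (1/2) *\<^sub>R (a + b)"
  obtain w where w: "w \<bullet> m = N m" "\<forall>x. w \<bullet> x \<le> N x" using support[OF nN] by blast
  have wab: "w \<bullet> a + w \<bullet> b = 2" using w(1) Mset_mid[OF M ab] unfolding m_def
    by (simp add: inner_add_right)
  have Jle: "w \<bullet> x \<le> w \<bullet> a \<and> w \<bullet> x \<le> w \<bullet> b" if "x \<in> J" for x
  proof -
    have "x \<in> S" "x \<noteq> a" "x \<noteq> b" using that J by auto
    then show ?thesis using Mset_ineq[OF M ab(1) _ _ w(2), of x] Mset_ineq[OF M ab(2) _ _ w(2), of x] wab
      by auto
  qed
  define z where "z = (1 - t) *\<^sub>R a + t *\<^sub>R b"
  have wz: "w \<bullet> z = (1 - t) * (w \<bullet> a) + t * (w \<bullet> b)" by (simp add: z_def inner_add_right)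
  have "J \<subseteq> {y. w \<bullet> y \<le> min (w \<bullet> a) (w \<bullet> b)}" using Jle by auto
  then have "convex hull J \<subseteq> {y. w \<bullet> y \<le> min (w \<bullet> a) (w \<bullet> b)}"
    by (intro hull_minimal convex_halfspace_le)
  with h have zle: "w \<bullet> z \<le> min (w \<bullet> a) (w \<bullet> b)" unfolding z_def by auto
  have eq: "w \<bullet> a = w \<bullet> b"
  proof (rule ccontr)
    assume ne: "w \<bullet> a \<noteq> w \<bullet> b"
    show False
    proof (cases "w \<bullet> a < w \<bullet> b")
      case True
      then have "t * (w \<bullet> a) < t * (w \<bullet> b)" using t by simp
      then have "w \<bullet> z > w \<bullet> a" using wz by (simp add: algebra_simps)
      then show False using zle by simp
    next
      case False
      then have "w \<bullet> b < w \<bullet> a" using ne by simp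
      then have "(1 - t) * (w \<bullet> b) < (1 - t) * (w \<bullet> a)" using t by simp
      then have "w \<bullet> z > w \<bullet> b" using wz by (simp add: algebra_simps)
      then show False using zle by simp
    qed
  qed
  then have wa1: "w \<bullet> a = 1" "w \<bullet> b = 1" using wab by auto
  have wz1: "w \<bullet> z = 1" using wz wa1 by (simp add: algebra_simps)
  obtain x where x: "x \<in> J" "w \<bullet> x \<ge> 1"
  proof (rule ccontr)
    assume "\<not> thesis"
    then have "\<forall>x\<in>J. w \<bullet> x < 1" using that by force
    then have "J \<subseteq> {y. w \<bullet> y < 1}" by auto
    then have "convex hull J \<subseteq> {y. w \<bullet> y < 1}" by (intro hull_minimal convex_halfspace_lt)
    with h wz1 show False unfolding z_def by auto
  qed
  have xS: "x \<in> S" "x \<noteq> a" "x \<noteq> b" using x J by auto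
  have wx: "w \<bullet> x = 1" using x Jle wa1 by force
  define F where "F = unit_ball N \<inter> {y. w \<bullet> y = 1}"
  have face: "F face_of unit_ball N" unfolding F_def
    by (rule face_of_Int_supporting_hyperplane_le[OF convex_unit_ball[OF nN]])
       (use w(2) in \<open>auto simp: unit_ball_def intro: order_trans\<close>)
  have w0: "w \<noteq> 0" using wa1 by auto
  have "aff_dim F \<le> aff_dim {y. w \<bullet> y = 1}" unfolding F_def by (rule aff_dim_subset) auto
  also have "\<dots> = 2" using w0 by simp
  finally have le2: "aff_dim F \<le> 2" .
  have inF: "(1/2) *\<^sub>R (p + q) \<in> F" if "p \<in> {a,b,x}" "q \<in> {a,b,x}" "p \<noteq> q" for p q
  proof -
    have "p \<in> S" "q \<in> S" "w \<bullet> p = 1" "w \<bullet> q = 1" using that ab xS wa1 wx by auto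
    then show ?thesis using Mset_mid[OF M _ _ that(3)] unfolding F_def unit_ball_def
      by (simp add: inner_add_right)
  qed
  have sub: "{(1/2) *\<^sub>R (b + x), (1/2) *\<^sub>R (a + x), (1/2) *\<^sub>R (a + b)} \<subseteq> F"
    using inF xS ab by auto
  have "\<not> collinear {a, b, x}" using Mset_not_collinear[OF nN M ab(1,2) xS(1) ab(3)] xS by auto
  then have "\<not> collinear {(1/2) *\<^sub>R (b + x), (1/2) *\<^sub>R (a + x), (1/2) *\<^sub>R (a + b)}"
    using collinear_mid_pre by blast
  then have "aff_dim {(1/2) *\<^sub>R (b + x), (1/2) *\<^sub>R (a + x), (1/2) *\<^sub>R (a + b)} \<ge> 2"
    unfolding collinear_aff_dim by simp
  then have "aff_dim F \<ge> 2" using aff_dim_subset[OF sub] by simp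
  with le2 face nf show False by auto
qed


lemma Mset_small_part:
  fixes N :: "real^3 \<Rightarrow> real"
  assumes nN: "is_norm N" and nf: "\<not> (\<exists>F. F face_of unit_ball N \<and> aff_dim F = 2)"
    and M: "M_set N S" and sub: "A \<subseteq> S" "P \<subseteq> S" and dis: "A \<inter> P = {}"
    and fin: "finite A" and cA: "card A \<le> 2"
    and int: "convex hull A \<inter> convex hull P \<noteq> {}"
  shows False
proof -
  obtain z where z: "z \<in> convex hull A" "z \<in> convex hull P" using int by blast
  have "card A = 0 \<or> card A = 1 \<or> card A = 2" using cA by auto
  then show False
  proof (elim disjE)
    assume "card A = 0"
    then have "A = {}" using fin by simp
    then show False using z by simp
  next
    assume "card A = 1"
    then obtain a where "A = {a}" by (auto simp: card_1_singleton_iff)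
    then show False using z sub dis Mset_vertex[OF nN M, of a P] by auto
  next
    assume "card A = 2"
    then obtain a b where A: "A = {a, b}" "a \<noteq> b" by (auto simp: card_2_iff)
    then have "z \<in> closed_segment a b" using z by (simp add: segment_convex_hull)
    then obtain t where t: "0 \<le> t" "t \<le> 1" "z = (1 - t) *\<^sub>R a + t *\<^sub>R b"
      unfolding closed_segment_def by blast
    have aS: "a \<in> S" "b \<in> S" "a \<notin> P" "b \<notin> P" using A sub dis by auto
    consider "t = 0" | "t = 1" | "0 < t \<and> t < 1" using t by linarith
    then show False
    proof cases
      case 1 then show ?thesis using t z aS Mset_vertex[OF nN M, of a P] sub by auto
    next
      case 2 then show ?thesis using t z aS Mset_vertex[OF nN M, of b P] sub by auto
    next
      case 3 then show ?thesis using Mset_pair[OF nN nf M aS(1,2) A(2) sub(2) aS(3,4), of t] t z by auto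
    qed
  qed
qed

lemma Mset_bound:
  fixes N :: "real^3 \<Rightarrow> real"
  assumes nN: "is_norm N" and nf: "\<not> (\<exists>F. F face_of unit_ball N \<and> aff_dim F = 2)"
    and M: "M_set N S"
  shows "finite S \<and> card S \<le> 4"
proof (rule ccontr)
  assume nS: "\<not> (finite S \<and> card S \<le> 4)"
  then obtain T where T: "T \<subseteq> S" "card T = 5" "finite T"
  proof (cases "finite S")
    case True
    with nS have "5 \<le> card S" by simp
    then show ?thesis using obtain_subset_with_card_n that by metis
  next
    case False
    then show ?thesis using infinite_arbitrarily_large that by metis
  qed
  have "affine_dependent T"
    by (rule affine_dependent_biggerset) (use T in auto)
  then obtain A P where AP: "A \<inter> P = {}" "A \<union> P = T" "convex hull A \<inter> convex hull P \<noteq> {}"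
    using Radon_partition[OF T(3)] by blast
  have fA: "finite A" "finite P" using AP(2) T(3) by (metis finite_Un)+
  have "card A + card P = 5" using AP(1,2) T(2) fA card_Un_disjoint by metis
  then have "card A \<le> 2 \<or> card P \<le> 2" by linarith
  then show False
  proof
    assume "card A \<le> 2"
    then show False using Mset_small_part[OF nN nf M, of A P] AP T fA by auto
  next
    assume "card P \<le> 2"
    then show False using Mset_small_part[OF nN nf M, of P A] AP T fA by (auto simp: Int_commute)
  qed
qed


lemma exists_Mset4:
  fixes N :: "real^3 \<Rightarrow> real"
  assumes nN: "is_norm N" and nf: "\<not> (\<exists>F. F face_of unit_ball N \<and> aff_dim F = 2)"
  shows "\<exists>S. M_set N S \<and> finite S \<and> card S = 4"
proof -
  obtain x0 :: "real^3" where "norm x0 = 1" using vector_choose_size[of 1] by auto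
  then have x0: "x0 \<noteq> 0" by auto
  define p where "p = (1 / N x0) *\<^sub>R x0"
  have Np: "N p = 1" using norm_unit[OF nN x0] p_def by simp
  obtain w where w: "w \<bullet> p = N p" "\<forall>x. w \<bullet> x \<le> N x" using support[OF nN] by blast
  have wp: "w \<bullet> p = 1" using w Np by simp
  have w0: "w \<noteq> 0" using wp by auto
  define F where "F = unit_ball N \<inter> {y. w \<bullet> y = 1}"
  have face: "F face_of unit_ball N" unfolding F_def
    by (rule face_of_Int_supporting_hyperplane_le[OF convex_unit_ball[OF nN]])
       (use w(2) in \<open>auto simp: unit_ball_def intro: order_trans\<close>)
  have "aff_dim F \<le> aff_dim {y. w \<bullet> y = 1}" unfolding F_def by (rule aff_dim_subset) auto
  also have "\<dots> = 2" using w0 by simp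
  finally have "aff_dim F \<le> 2" .
  with face nf have "aff_dim F \<le> 1" by force
  then have "collinear F" by (simp add: collinear_aff_dim)
  then obtain u where u: "\<forall>x\<in>F. \<forall>y\<in>F. \<exists>c. x - y = c *\<^sub>R u" unfolding collinear_def by blast
  have pF: "p \<in> F" using Np wp unfolding F_def unit_ball_def by simp
  define K where "K = {y :: real^3. w \<bullet> y = 0}"
  have dimK: "dim K = 2" unfolding K_def using dim_hyperplane[OF w0] by simp
  have outside: "\<exists>e\<in>K. e \<notin> span {v}" for v
  proof (rule ccontr)
    assume "\<not> ?thesis"
    then have "K \<subseteq> span {v}" by auto
    then have "dim K \<le> dim (span {v})" by (rule dim_subset)
    also have "\<dots> \<le> 1" by simp
    finally show False using dimK by simp
  qed
  have good: "N (p + y) > 1" if "y \<in> K" "y \<notin> span {u}" for y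
  proof (rule ccontr)
    assume "\<not> N (p + y) > 1"
    moreover have "w \<bullet> (p + y) = 1" using that wp unfolding K_def by (simp add: inner_add_right)
    ultimately have "p + y \<in> F" using w(2)[rule_format, of "p + y"] unfolding F_def unit_ball_def by simp
    then obtain c where "(p + y) - p = c *\<^sub>R u" using u pF by blast
    then have "y = c *\<^sub>R u" by simp
    then have "y \<in> span {u}" by (simp add: span_base span_mul)
    with that show False by simp
  qed
  have good2: "N (p + y) > 1 \<and> N (p - y) > 1" if "y \<in> K" "y \<notin> span {u}" for y
  proof -
    have "- y \<in> K" "- y \<notin> span {u}" using that span_neg[of "-y" "{u}"] unfolding K_def by auto
    then show ?thesis using good[OF that] good[of "-y"] by simp
  qed
  have scK: "c *\<^sub>R y \<in> K" if "y \<in> K" for c y using that unfolding K_def by simp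
  obtain e where e: "e \<in> K" "e \<notin> span {u}" using outside by blast
  then have e0: "e \<noteq> 0" using span_zero by auto
  define e1 where "e1 = (1 / N e) *\<^sub>R e"
  have Ne1: "N e1 = 1" using norm_unit[OF nN e0] e1_def by simp
  have e1K: "e1 \<in> K" using scK e(1) e1_def by simp
  have e1u: "e1 \<notin> span {u}"
  proof
    assume "e1 \<in> span {u}"
    then have "N e *\<^sub>R e1 \<in> span {u}" by (rule span_mul)
    moreover have "N e *\<^sub>R e1 = e" using norm_pos[OF nN e0] by (simp add: e1_def)
    ultimately show False using e by simp
  qed
  have e10: "e1 \<noteq> 0" using Ne1 norm_zero[OF nN] by auto
  obtain f1 where f1: "f1 \<in> K" "N f1 = 1" "e1 + f1 \<notin> span {u}" "e1 - f1 \<notin> span {u}"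
  proof (cases "\<exists>f\<in>K. f \<noteq> 0 \<and> f \<in> span {u}")
    case True
    then obtain f where f: "f \<in> K" "f \<noteq> 0" "f \<in> span {u}" by blast
    define f1 where "f1 = (1 / N f) *\<^sub>R f"
    have "f1 \<in> K" "N f1 = 1" "f1 \<in> span {u}"
      using scK f norm_unit[OF nN f(2)] span_mul[OF f(3)] unfolding f1_def by auto
    moreover have "e1 + f1 \<notin> span {u}"
    proof
      assume "e1 + f1 \<in> span {u}"
      then have "(e1 + f1) - f1 \<in> span {u}" using \<open>f1 \<in> span {u}\<close> by (rule span_diff)
      then show False using e1u by simp
    qed
    moreover have "e1 - f1 \<notin> span {u}"
    proof
      assume "e1 - f1 \<in> span {u}"
      then have "(e1 - f1) + f1 \<in> span {u}" using \<open>f1 \<in> span {u}\<close> by (rule span_add)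
      then show False using e1u by simp
    qed
    ultimately show ?thesis using that by blast
  next
    case False
    obtain f where f: "f \<in> K" "f \<notin> span {e1}" using outside by blast
    then have f0: "f \<noteq> 0" using span_zero by auto
    define f1 where "f1 = (1 / N f) *\<^sub>R f"
    have f1K: "f1 \<in> K" "N f1 = 1" using scK f norm_unit[OF nN f0] unfolding f1_def by auto
    have f1e: "f1 \<notin> span {e1}"
    proof
      assume "f1 \<in> span {e1}"
      then have "N f *\<^sub>R f1 \<in> span {e1}" by (rule span_mul)
      moreover have "N f *\<^sub>R f1 = f" using norm_pos[OF nN f0] by (simp add: f1_def)
      ultimately show False using f by simp
    qed
    have "e1 + f1 \<in> K" "e1 - f1 \<in> K" using e1K f1K unfolding K_def by (auto simp: inner_add_right inner_diff_right)
    moreover have "e1 + f1 \<noteq> 0"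
    proof
      assume "e1 + f1 = 0"
      then have "f1 = (-1) *\<^sub>R e1" by (simp add: eq_neg_iff_add_eq_0 add.commute)
      then have "f1 \<in> span {e1}" by (simp add: span_base span_neg)
      with f1e show False by simp
    qed
    moreover have "e1 - f1 \<noteq> 0"
    proof
      assume "e1 - f1 = 0"
      then have "f1 \<in> span {e1}" by (simp add: span_base)
      with f1e show False by simp
    qed
    ultimately show ?thesis using that f1K False by blast
  qed
  define q where "q = e1 + f1"
  define s where "s = e1 - f1"
  have qK: "q \<in> K" "q \<notin> span {u}" "s \<in> K" "s \<notin> span {u}"
    using e1K f1 unfolding q_def s_def K_def by (auto simp: inner_add_right inner_diff_right)
  define A where "A = p + q"
  define B where "B = p - q"
  define C where "C = - p + s"
  define D where "D = - p - s"
  have NA: "N A > 1" "N B > 1" using good2[OF qK(1,2)] unfolding A_def B_def by auto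
  have NC: "N C > 1" "N D > 1"
  proof -
    have "N (p + s) > 1" "N (p - s) > 1" using good2[OF qK(3,4)] by auto
    moreover have "C = - (p - s)" "D = - (p + s)" unfolding C_def D_def by simp_all
    ultimately show "N C > 1" "N D > 1" using norm_neg[OF nN, of "p - s"] norm_neg[OF nN, of "p + s"] by metis+
  qed
  have wK: "w \<bullet> q = 0" "w \<bullet> s = 0" using qK unfolding K_def by auto
  have wA: "w \<bullet> A = 1" "w \<bullet> B = 1" "w \<bullet> C = -1" "w \<bullet> D = -1"
    using wK wp unfolding A_def B_def C_def D_def by (auto simp: inner_add_right inner_diff_right)
  have q0: "q \<noteq> 0" "s \<noteq> 0" using qK span_zero by auto
  have AB: "A - B = 2 *\<^sub>R q" "C - D = 2 *\<^sub>R s" unfolding A_def B_def C_def D_def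
    by (simp_all add: scaleR_2)
  have dist: "A \<noteq> B" "A \<noteq> C" "A \<noteq> D" "B \<noteq> C" "B \<noteq> D" "C \<noteq> D"
    using wA q0 AB by (force+)
  have h2: "(1/2) *\<^sub>R (x * 2) = x" for x :: "real^3" by (simp add: vec_eq_iff)
  have mids: "(1/2) *\<^sub>R (A + B) = p" "(1/2) *\<^sub>R (A + C) = e1" "(1/2) *\<^sub>R (A + D) = f1"
    "(1/2) *\<^sub>R (B + C) = - f1" "(1/2) *\<^sub>R (B + D) = - e1" "(1/2) *\<^sub>R (C + D) = - p"
    unfolding A_def B_def C_def D_def q_def s_def
    by (simp_all add: algebra_simps del: mult_2 mult_2_right add: scaleR_2[symmetric] h2)
  have mids': "(1/2) *\<^sub>R (B + A) = p" "(1/2) *\<^sub>R (C + A) = e1" "(1/2) *\<^sub>R (D + A) = f1"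
    "(1/2) *\<^sub>R (C + B) = - f1" "(1/2) *\<^sub>R (D + B) = - e1" "(1/2) *\<^sub>R (D + C) = - p"
    using mids by (simp_all add: add.commute)
  define S where "S = {A, B, C, D}"
  have one: "N ((1/2) *\<^sub>R (x + y)) = 1" if "x \<in> S" "y \<in> S" "x \<noteq> y" for x y
  proof -
    have N1: "N p = 1" "N e1 = 1" "N f1 = 1" "N (- p) = 1" "N (- e1) = 1" "N (- f1) = 1"
      using Np Ne1 f1(2) norm_neg[OF nN] by auto
    have c: "(1/2) *\<^sub>R (y + x) = (1/2) *\<^sub>R (x + y)" by (simp add: add.commute)
    show ?thesis using that unfolding S_def by (auto simp: mids mids' N1)
  qed
  have "M_set N S"
    unfolding M_set_def midpoint_set_def using one NA NC unfolding S_def by auto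
  moreover have "finite S" "card S = 4" unfolding S_def using dist by auto
  ultimately show ?thesis by blast
qed

theorem theorem4:
  fixes N :: "real^3 \<Rightarrow> real"
  assumes "is_norm N"
    and "\<not> (\<exists>F. F face_of unit_ball N \<and> aff_dim F = 2)"
  shows "m_num N = 4"
proof -
  obtain S0 where S0: "M_set N S0" "finite S0" "card S0 = 4" using exists_Mset4[OF assms] by blast
  have "m_num N \<le> 4" unfolding m_num_def
  proof (rule SUP_least)
    fix S assume "S \<in> {S. M_set N S}"
    then have "finite S \<and> card S \<le> 4" using Mset_bound[OF assms] by auto
    then show "(if finite S then enat (card S) else \<infinity>) \<le> 4" by (simp add: numeral_eq_enat)
  qed
  moreover have "4 \<le> m_num N" unfolding m_num_def
  proof -
    have "(if finite S0 then enat (card S0) else \<infinity>) \<le> (SUP S \<in> {S. M_set N S}. (if finite S then enat (card S) else \<infinity>))"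
      by (rule SUP_upper) (use S0 in auto)
    then show "4 \<le> (SUP S \<in> {S. M_set N S}. (if finite S then enat (card S) else \<infinity>))"
      using S0 by (simp add: numeral_eq_enat)
  qed
  ultimately show ?thesis by simp
qed

end
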